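(* Let $\lambda>0$, let $(\mathbf{l}_n)_{n\in\mathbb{N}^+}$ be a sequence with $\mathbf{l}_n\in[-1,1]$, and let $(a_n)_{n\in\mathbb{N}^+}$ be a sequence of positive integers with $a_{n+1}>a_n$. Suppose that $\sum_{n=1}^{\infty}e^{-\mathbf{l}_n a_n t}$ is majorized by $t^{-\lambda}$ as $t\to0^+$ (i.e. there is $C>0$ with $\sum_{n=1}^{\infty}e^{-\mathbf{l}_n a_n t}\le C t^{-\lambda}$ for all sufficiently small $t>0$). Then the Euler product $$\prod_{n=1}^{\infty}\frac{1}{1-\mathbf{l}_n a_n^{-s}}$$ admits an analytic continuation to the half-plane $\Re(s)>\max(1/2,\lambda)$ having no zeros and no singularities there.
   Context: For $a>0$, $a^{-s}=e^{-s\ln a}$. *)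

theory Defs
  imports "HOL-Analysis.Analysis"
begin

end

theory Submission imports Defs "HOL-Complex_Analysis.Complex_Analysis" begin

lemma b_ge:
  fixes b :: "nat \<Rightarrow> nat"
  assumes "b 0 \<ge> 1" "\<And>n. b n < b (Suc n)"
  shows "b n \<ge> n + 1"
  using assms by (induction n) (auto simp: Suc_le_eq intro: le_less_trans)

lemma summable_b:
  fixes b :: "nat \<Rightarrow> nat" and l :: "nat \<Rightarrow> real"
  assumes lam: "lam > 0" and l1: "\<And>n. l n \<le> 1"
    and b0: "b 0 \<ge> 1" and binc: "\<And>n. b n < b (Suc n)"
    and C: "C > 0" and delta: "\<delta> > 0"
    and maj: "\<And>t. 0 < t \<Longrightarrow> t < \<delta> \<Longrightarrow> summable (\<lambda>n. exp (- l n * real (b n) * t)) \<and>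
            (\<Sum>n. exp (- l n * real (b n) * t)) \<le> C * t powr (- lam)"
    and sig: "\<sigma> > lam"
  shows "summable (\<lambda>n. real (b n) powr (- \<sigma>))"
proof -
  have bge: "b n \<ge> n + 1" for n using b_ge[of b n] b0 binc by auto
  define N where "N = nat \<lceil>1/\<delta>\<rceil>"
  define K where "K = (exp 1 * C) powr (\<sigma>/lam)"
  have key: "real (n+1) \<le> exp 1 * C * real (b n) powr lam" if "n \<ge> N" for n
  proof -
    have bpos: "real (b n) > 0" using bge[of n] by simp
    have "real (b n) \<ge> real n + 1" using bge[of n] by simp
    moreover have "real n \<ge> 1/\<delta>" using that unfolding N_def by linarith
    ultimately have gt: "real (b n) > 1/\<delta>" by linarith
    define t where "t = 1 / real (b n)"
    have t0: "t > 0" using bpos by (simp add: t_def)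
    have td: "t < \<delta>" using gt delta bpos unfolding t_def by (simp add: field_simps)
    from maj[OF t0 td] have sm: "summable (\<lambda>n. exp (- l n * real (b n) * t))"
      and le: "(\<Sum>n. exp (- l n * real (b n) * t)) \<le> C * t powr (- lam)" by auto
    have "(\<Sum>k<n+1. exp (-1)) \<le> (\<Sum>k<n+1. exp (- l k * real (b k) * t))"
    proof (intro sum_mono)
      fix k assume "k \<in> {..<n+1}"
      then have "k \<le> n" by simp
      have "b k \<le> b n"
        using \<open>k \<le> n\<close> binc by (metis lift_Suc_mono_less_iff nless_le not_less)
      then have "real (b k) * t \<le> 1" using bpos by (simp add: t_def)
      moreover have "l k * real (b k) * t \<le> real (b k) * t"
        using l1[of k] t0 mult_right_mono[of "l k" 1 "real (b k) * t"] by (simp add: mult.assoc)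
      ultimately show "exp (-1) \<le> exp (- l k * real (b k) * t)" by simp
    qed
    also have "\<dots> \<le> (\<Sum>k. exp (- l k * real (b k) * t))"
      by (rule sum_le_suminf[OF sm]) auto
    also have "\<dots> \<le> C * t powr (- lam)" by (rule le)
    also have "t powr (- lam) = real (b n) powr lam"
      using bpos by (simp add: t_def powr_minus_divide powr_divide)
    finally have "real (n+1) * exp (-1) \<le> C * real (b n) powr lam" by simp
    then show ?thesis by (simp add: exp_minus field_simps)
  qed
  have "summable (\<lambda>n. K * real (Suc n) powr (- (\<sigma>/lam)))"
  proof -
    have "summable (\<lambda>n. real n powr (- (\<sigma>/lam)))"
      using sig lam by (subst summable_real_powr_iff) (simp add: field_simps)
    then have "summable (\<lambda>n. real (Suc n) powr (- (\<sigma>/lam)))"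
      by (subst summable_Suc_iff)
    then show ?thesis by (rule summable_mult)
  qed
  moreover have "norm (real (b n) powr (- \<sigma>)) \<le> K * real (Suc n) powr (- (\<sigma>/lam))" if "n \<ge> N" for n
  proof -
    have bpos: "real (b n) > 0" using bge[of n] by simp
    have A: "real (Suc n) / (exp 1 * C) \<le> real (b n) powr lam"
      using key[OF that] C by (simp add: field_simps)
    have "real (b n) powr (- \<sigma>) = (real (b n) powr lam) powr (- (\<sigma>/lam))"
      using lam by (simp add: powr_powr)
    also have "\<dots> \<le> (real (Suc n) / (exp 1 * C)) powr (- (\<sigma>/lam))"
      by (rule powr_mono2') (use A C lam sig in auto)
    also have "\<dots> = K * real (Suc n) powr (- (\<sigma>/lam))"
      using C by (simp add: K_def powr_divide powr_minus field_simps)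
    finally show ?thesis by simp
  qed
  ultimately show ?thesis by (rule summable_comparison_test')
qed

lemma half_between: "(m::real) < x \<Longrightarrow> m < x - (x-m)/2 \<and> 0 < (x-m)/2"
  by (auto simp: field_simps)

lemma factor_bound:
  fixes z :: complex
  assumes "norm z \<le> 3/4"
  shows "norm (1/(1-z) - 1) \<le> 4 * norm z" "1 - z \<noteq> 0"
proof -
  have n1: "norm (1 - z) \<ge> 1/4"
    using norm_triangle_ineq2[of 1 z] assms by simp
  then show nz: "1 - z \<noteq> 0" by auto
  have "1/(1-z) - 1 = z / (1 - z)" using nz by (simp add: field_simps)
  then have "norm (1/(1-z) - 1) = norm z / norm (1 - z)" by (simp add: norm_divide)
  also have "\<dots> \<le> norm z / (1/4)"
    by (rule divide_left_mono) (use n1 in auto)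
  finally show "norm (1/(1-z) - 1) \<le> 4 * norm z" by simp
qed

lemma small_powr:
  fixes m :: nat and \<sigma> :: real
  assumes "m \<ge> 2" "\<sigma> \<ge> 1/2"
  shows "real m powr (- \<sigma>) \<le> 3/4"
proof -
  have "real m powr (- \<sigma>) \<le> real m powr (- (1/2))"
    by (rule powr_mono) (use assms in auto)
  also have "\<dots> = inverse (sqrt (real m))"
    using assms by (simp add: powr_minus powr_half_sqrt)
  also have "\<dots> \<le> 3/4"
  proof -
    have "(4/3::real)^2 \<le> real m" using assms by (simp add: power2_eq_square)
    then have "4/3 \<le> sqrt (real m)" by (rule real_le_rsqrt)
    moreover have "sqrt (real m) > 0" using assms by simp
    ultimately show ?thesis by (simp add: inverse_eq_divide divide_le_eq)
  qed
  finally show ?thesis .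
qed

lemma norm_z:
  fixes m :: nat and x :: real and s :: complex
  assumes "m > 0" "\<bar>x\<bar> \<le> 1"
  shows "norm (complex_of_real x * of_nat m powr (- s)) \<le> real m powr (- Re s)"
proof -
  have "norm (of_nat m powr (- s) :: complex) = real m powr (- Re s)"
    by (subst norm_powr_real_powr) auto
  then show ?thesis
    using assms by (simp add: norm_mult mult_left_le_one_le)
qed


theorem mainTheorem3:
  fixes lam :: real and l :: "nat \<Rightarrow> real" and a :: "nat \<Rightarrow> nat"
  assumes lam_pos: "lam > 0"
    and l_range: "\<forall>n\<ge>1. l n \<in> {-1..1}"
    and a_pos: "\<forall>n\<ge>1. a n > 0"
    and a_incr: "\<forall>n\<ge>1. a (Suc n) > a n"
    and factor_defined: "\<forall>n\<ge>1. a n = 1 \<longrightarrow> l n \<noteq> 1"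
    and majorized: "\<exists>C>0. eventually (\<lambda>t.
            summable (\<lambda>n. exp (- l (Suc n) * real (a (Suc n)) * t)) \<and>
            (\<Sum>n. exp (- l (Suc n) * real (a (Suc n)) * t)) \<le> C * t powr (- lam))
          (at_right 0)"
  shows "\<exists>F :: complex \<Rightarrow> complex.
           F holomorphic_on {s. Re s > max (1/2) lam} \<and>
           (\<forall>s\<in>{s. Re s > max (1/2) lam}. F s \<noteq> 0) \<and>
           (\<exists>\<sigma>0. \<forall>s. Re s > max \<sigma>0 (max (1/2) lam) \<longrightarrow>
              (\<lambda>n. 1 / (1 - complex_of_real (l (Suc n)) * of_nat (a (Suc n)) powr (- s)))
                has_prod F s)"
proof -
  define b where "b n = a (Suc n)" for n
  define f where "f n s = 1 / (1 - complex_of_real (l (Suc n)) * of_nat (a (Suc n)) powr (- s))" for n s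
  define S where "S = {s. Re s > max (1/2) lam}"
  define F where "F s = prodinf (\<lambda>n. f n s)" for s
  have b0: "b 0 \<ge> 1" using a_pos by (simp add: b_def Suc_le_eq)
  have binc: "b n < b (Suc n)" for n using a_incr by (simp add: b_def)
  have bge: "b n \<ge> n + 1" for n using b_ge[of b n] b0 binc by auto
  have labs: "\<bar>l (Suc n)\<bar> \<le> 1" for n
    using l_range[rule_format, of "Suc n"] by (simp add: abs_le_iff)
  have l1: "l (Suc n) \<le> 1" for n using labs[of n] by (simp add: abs_le_iff)
  obtain C where C: "C > 0" and ev: "eventually (\<lambda>t.
            summable (\<lambda>n. exp (- l (Suc n) * real (a (Suc n)) * t)) \<and>
            (\<Sum>n. exp (- l (Suc n) * real (a (Suc n)) * t)) \<le> C * t powr (- lam))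
          (at_right 0)" using majorized by blast
  then obtain \<delta> where delta: "\<delta> > 0" and maj: "\<And>t. 0 < t \<Longrightarrow> t < \<delta> \<Longrightarrow>
            summable (\<lambda>n. exp (- l (Suc n) * real (b n) * t)) \<and>
            (\<Sum>n. exp (- l (Suc n) * real (b n) * t)) \<le> C * t powr (- lam)"
    unfolding eventually_at_right_field b_def by auto
  have summ: "summable (\<lambda>n. real (b n) powr (- \<sigma>))" if "\<sigma> > lam" for \<sigma>
    by (rule summable_b[of lam "\<lambda>n. l (Suc n)" b C \<delta>]) (use lam_pos l1 b0 binc C delta maj that in auto)
  have bnd: "norm (f n s - 1) \<le> 4 * real (b n) powr (- \<sigma>)"
    if "n \<ge> 1" "Re s \<ge> \<sigma>" "\<sigma> \<ge> 1/2" for n s \<sigma>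
  proof -
    have b2: "b n \<ge> 2" using bge[of n] that by simp
    have "norm (complex_of_real (l (Suc n)) * of_nat (b n) powr (- s)) \<le> real (b n) powr (- Re s)"
      by (rule norm_z) (use b2 labs in auto)
    also have "\<dots> \<le> real (b n) powr (- \<sigma>)"
      by (rule powr_mono) (use that b2 in auto)
    finally have z: "norm (complex_of_real (l (Suc n)) * of_nat (b n) powr (- s)) \<le> real (b n) powr (- \<sigma>)" .
    have "real (b n) powr (- \<sigma>) \<le> 3/4" by (rule small_powr) (use b2 that in auto)
    with z have "norm (f n s - 1) \<le> 4 * norm (complex_of_real (l (Suc n)) * of_nat (b n) powr (- s))"
      unfolding f_def b_def by (intro factor_bound) auto
    with z show ?thesis by linarith
  qed
  have nz: "1 - complex_of_real (l (Suc n)) * of_nat (a (Suc n)) powr (- s) \<noteq> 0"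
    if "Re s \<ge> 1/2" for n s
  proof (cases "b n = 1")
    case True
    then have "l (Suc n) \<noteq> 1" using factor_defined by (simp add: b_def)
    then show ?thesis using True by (simp add: b_def)
  next
    case False
    then have b2: "b n \<ge> 2" using bge[of n] by simp
    have "norm (complex_of_real (l (Suc n)) * of_nat (b n) powr (- s)) \<le> real (b n) powr (- Re s)"
      by (rule norm_z) (use b2 labs in auto)
    also have "\<dots> \<le> 3/4" by (rule small_powr) (use b2 that in auto)
    finally show ?thesis using factor_bound(2) unfolding b_def by blast
  qed
  have fnz: "f n s \<noteq> 0" if "Re s \<ge> 1/2" for n s
    using nz[OF that, of n] by (simp add: f_def)
  have conv: "convergent_prod (\<lambda>n. f n s)" if "s \<in> S" for s
  proof -
    have "summable (\<lambda>n. norm (f n s - 1))"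
    proof (rule summable_comparison_test'[where N=1])
      show "summable (\<lambda>n. 4 * real (b n) powr (- Re s))"
        using summ[of "Re s"] that by (auto simp: S_def intro: summable_mult)
      show "norm (norm (f n s - 1)) \<le> 4 * real (b n) powr (- Re s)" if "n \<ge> 1" for n
        using bnd[of n "Re s" s] that \<open>s \<in> S\<close> by (auto simp: S_def)
    qed
    then show ?thesis
      by (intro abs_convergent_prod_imp_convergent_prod summable_imp_abs_convergent_prod)
  qed
  have holo_f: "f n holomorphic_on S" for n
    unfolding f_def using nz by (auto simp: S_def intro!: holomorphic_intros)
  have openS: "open S"
    unfolding S_def by (rule open_halfspace_Re_gt)
  have locF: "F field_differentiable (at z0)" if "z0 \<in> S" for z0
  proof -
    define r where "r = (Re z0 - max (1/2) lam) / 2"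
    define \<sigma>' where "\<sigma>' = Re z0 - r"
    have m: "Re z0 > max (1/2) lam" using that by (simp add: S_def)
    have r0: "r > 0" using half_between[OF m] unfolding r_def by blast
    have sig': "\<sigma>' > max (1/2) lam" using half_between[OF m] unfolding r_def \<sigma>'_def by blast
    have ReS: "Re s \<ge> \<sigma>'" if "s \<in> cball z0 r" for s
    proof -
      have "\<bar>Re z0 - Re s\<bar> \<le> r"
        using that abs_Re_le_cmod[of "z0 - s"] by (simp add: dist_norm)
      then show ?thesis by (simp add: \<sigma>'_def)
    qed
    have cS: "cball z0 r \<subseteq> S" using ReS sig' by (force simp: S_def)
    have uc: "uniformly_convergent_on (cball z0 r) (\<lambda>N s. \<Prod>n<N. f n s)"
    proof (rule uniformly_convergent_on_prod')
      show "continuous_on (cball z0 r) (f n)" for n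
        using holomorphic_on_imp_continuous_on[OF holo_f] cS continuous_on_subset by blast
      show "compact (cball z0 r)" by simp
      show "uniformly_convergent_on (cball z0 r) (\<lambda>N x. \<Sum>n<N. norm (f n x - 1))"
      proof (rule Weierstrass_m_test'_ev)
        show "summable (\<lambda>n. 4 * real (b n) powr (- \<sigma>'))"
          using summ[of \<sigma>'] sig' by (auto intro: summable_mult)
        show "\<forall>\<^sub>F n in sequentially. \<forall>x\<in>cball z0 r. norm (norm (f n x - 1)) \<le> 4 * real (b n) powr (- \<sigma>')"
          using eventually_ge_at_top[of 1]
          by eventually_elim (use bnd ReS sig' in auto)
      qed
    qed
    then have ul0: "uniform_limit (cball z0 r) (\<lambda>N s. \<Prod>n<N. f n s) (\<lambda>s. lim (\<lambda>N. \<Prod>n<N. f n s)) sequentially"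
      using uniformly_convergent_uniform_limit_iff by blast
    have limeq: "lim (\<lambda>N. \<Prod>n<N. f n s) = F s" if "s \<in> cball z0 r" for s
    proof -
      have "(\<lambda>N. \<Prod>n\<le>N. f n s) \<longlonglongrightarrow> F s"
        unfolding F_def by (rule convergent_prod_LIMSEQ, rule conv) (use cS that in auto)
      then have "(\<lambda>N. \<Prod>n<N. f n s) \<longlonglongrightarrow> F s"
        using LIMSEQ_lessThan_iff_atMost by blast
      then show ?thesis by (rule limI)
    qed
    have ul: "uniform_limit (cball z0 r) (\<lambda>N s. \<Prod>n<N. f n s) F sequentially"
      using ul0 by (subst (asm) uniform_limit_cong'[OF refl limeq]) auto
    obtain "F holomorphic_on ball z0 r"
    proof (rule holomorphic_uniform_limit[OF _ ul])
      show "\<forall>\<^sub>F n in sequentially. continuous_on (cball z0 r) (\<lambda>s. \<Prod>n<n. f n s) \<and>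
              (\<lambda>s. \<Prod>n<n. f n s) holomorphic_on ball z0 r"
      proof (intro always_eventually allI conjI)
        fix N
        have h: "(\<lambda>s. \<Prod>n<N. f n s) holomorphic_on S"
          by (intro holomorphic_intros holo_f)
        show "continuous_on (cball z0 r) (\<lambda>s. \<Prod>n<N. f n s)"
          using holomorphic_on_imp_continuous_on[OF h] cS continuous_on_subset by blast
        show "(\<lambda>s. \<Prod>n<N. f n s) holomorphic_on ball z0 r"
          using h cS ball_subset_cball holomorphic_on_subset by blast
      qed
    qed auto
    then show ?thesis
      using holomorphic_on_imp_differentiable_at[of F "ball z0 r" z0] r0 by auto
  qed
  have "F holomorphic_on S"
    unfolding holomorphic_on_def using locF field_differentiable_at_within by blast
  moreover have "\<forall>s\<in>S. F s \<noteq> 0"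
  proof
    fix s assume "s \<in> S"
    then have "Re s \<ge> 1/2" by (simp add: S_def)
    then show "F s \<noteq> 0"
      unfolding F_def using prodinf_nonzero[OF conv[OF \<open>s \<in> S\<close>] fnz] by blast
  qed
  moreover have "\<forall>s. Re s > max 0 (max (1/2) lam) \<longrightarrow> (\<lambda>n. f n s) has_prod F s"
    using conv unfolding F_def by (auto simp: S_def)
  ultimately show ?thesis unfolding S_def f_def by blast
qed

end
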